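(* Assume the predator–prey parasite model described in the context, and suppose Assumptions (A) and (B) hold. Then for every $t>0$, \[ \frac{\mathrm{var}(Y_{t})}{\mathbb{E}(Y_{t})} \leq \frac{\mathbb{E}(\tilde{X}^{2}_{t})}{\mathbb{E}(\tilde{X}_{t})}, \] and \[ \frac{\mathrm{var}(Y_{t})}{\mathbb{E}(Y_{t})} \geq \frac{1}{\Psi(t)} \int^{t}_{0} \left(\frac{\mathbb{E}(\tilde{X}^{2}_{s})}{\mathbb{E}(\tilde{X}_{s})}\right) \psi(s)\, ds \geq \int^{\infty}_{0} \left(\frac{\mathrm{var}(X_{r})}{\mathbb{E}(X_{r})} + \mathbb{E}(X_{r}) \right) \left( \frac{1}{\Psi(t)} \int^{t}_{0} f_{\tilde{A}_{s}} (r)\, \psi(s)\, ds \right) dr. \]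
   Context: Model. The parasite burden of a prey aged $t\ge 0$ is $X_t$, where $(X_t)_{t\ge0}$ is a non-decreasing integer-valued stochastic process with $X_0=0$ (all moments used are assumed finite, and denominators positive). Prey ages in the prey population have probability density $f_A$ on $[0,\infty)$. A predator encounters random members of the prey population at the times of a non-homogeneous Poisson process with intensity $\phi:[0,\infty)\to[0,\infty)$; when a predator aged $t$ encounters a prey aged $u$, it consumes it with probability $p(u,t)\in[0,1]$. Hence the consumption times form a Poisson process with intensity $\psi(t)=\phi(t)\int_0^\infty p(u,t)f_A(u)\,du$; set $\Psi(t)=\int_0^t\psi(s)\,ds$. The age $\tilde A_t$ of a prey consumed by a predator aged $t$ has density $f_{\tilde A_t}(a)= p(a,t)f_A(a)/\int_0^\infty p(u,t)f_A(u)\,du$, and the parasite burden of such a consumed prey is $\tilde X_t = X_{\tilde A_t}$ (with $\tilde A_t$ independent of the process $X$). A consumed prey transfers all its parasites to the predator, and the contributions of different consumed prey are independent. Thus the predator's burden $Y_t$ at age $t$ (with $Y_0=0$) is the sum, over the consumption times $s\le t$, of independent copies of $\tilde X_s$; in particular $\mathbb{E}(Y_t)=\int_0^t\mathbb{E}(\tilde X_s)\psi(s)\,ds$ and $\mathrm{var}(Y_t)=\int_0^t \mathbb{E}(\tilde X_s^2)\psi(s)\,ds$. Likelihood ratio order: for random variables $U,V$ (both discrete or both continuous) with mass/density functions $p_U,p_V$, write $U\le_{lr}V$ if $p_V(w)/p_U(w)$ is non-decreasing in $w$ over the union of the supports of $U$ and $V$. Assumption (A): for all $0\le s\le t$, $X_s\le_{lr}X_t$.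 Assumption (B): for all $0\le s<t$, the ratio $p(u,t)/p(u,s)$ is a non-decreasing function of $u$. *)

theory Defs
  imports "HOL-Probability.Probability"
begin

text \<open>Extended ratio a/b with the convention a/0 = infinity (used only on the union of
  supports, where a and b are not both zero).\<close>
definition ext_ratio :: "real \<Rightarrow> real \<Rightarrow> ereal" where
  "ext_ratio a b = (if b = 0 then \<infinity> else ereal (a / b))"

text \<open>Likelihood ratio order for discrete (nat-valued) random variables given by their
  mass functions: U \<le>lr V iff pV/pU is non-decreasing on the union of the supports.\<close>
definition lr_le :: "(nat \<Rightarrow> real) \<Rightarrow> (nat \<Rightarrow> real) \<Rightarrow> bool" where
  "lr_le pU pV \<longleftrightarrow> mono_on {w. pU w > 0 \<or> pV w > 0} (\<lambda>w. ext_ratio (pV w) (pU w))"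

definition pmfX :: "'w measure \<Rightarrow> (real \<Rightarrow> 'w \<Rightarrow> nat) \<Rightarrow> real \<Rightarrow> nat \<Rightarrow> real" where
  "pmfX M X r k = measure M {\<omega> \<in> space M. X r \<omega> = k}"

definition meanX :: "'w measure \<Rightarrow> (real \<Rightarrow> 'w \<Rightarrow> nat) \<Rightarrow> real \<Rightarrow> real" where
  "meanX M X r = integral\<^sup>L M (\<lambda>\<omega>. real (X r \<omega>))"

definition sqmX :: "'w measure \<Rightarrow> (real \<Rightarrow> 'w \<Rightarrow> nat) \<Rightarrow> real \<Rightarrow> real" where
  "sqmX M X r = integral\<^sup>L M (\<lambda>\<omega>. (real (X r \<omega>))\<^sup>2)"

definition varX :: "'w measure \<Rightarrow> (real \<Rightarrow> 'w \<Rightarrow> nat) \<Rightarrow> real \<Rightarrow> real" where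
  "varX M X r = integral\<^sup>L M (\<lambda>\<omega>. (real (X r \<omega>) - meanX M X r)\<^sup>2)"

text \<open>Normalising constant: probability that an encountered prey is consumed by a predator of age t.\<close>
definition cons_norm :: "(real \<Rightarrow> real \<Rightarrow> real) \<Rightarrow> (real \<Rightarrow> real) \<Rightarrow> real \<Rightarrow> real" where
  "cons_norm p fA t = set_lebesgue_integral lborel {0..} (\<lambda>u. p u t * fA u)"

definition psi :: "(real \<Rightarrow> real) \<Rightarrow> (real \<Rightarrow> real \<Rightarrow> real) \<Rightarrow> (real \<Rightarrow> real) \<Rightarrow> real \<Rightarrow> real" where
  "psi \<phi> p fA t = \<phi> t * cons_norm p fA t"

definition Psi :: "(real \<Rightarrow> real) \<Rightarrow> (real \<Rightarrow> real \<Rightarrow> real) \<Rightarrow> (real \<Rightarrow> real) \<Rightarrow> real \<Rightarrow> real" where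
  "Psi \<phi> p fA t = set_lebesgue_integral lborel {0..t} (psi \<phi> p fA)"

text \<open>Density of the age of a prey consumed by a predator aged t.\<close>
definition fAt :: "(real \<Rightarrow> real \<Rightarrow> real) \<Rightarrow> (real \<Rightarrow> real) \<Rightarrow> real \<Rightarrow> real \<Rightarrow> real" where
  "fAt p fA t a = p a t * fA a / cons_norm p fA t"

text \<open>Moments of the consumed prey burden X~_t = X_{A~_t}, A~_t independent of X.\<close>
definition meanXt :: "'w measure \<Rightarrow> (real \<Rightarrow> 'w \<Rightarrow> nat) \<Rightarrow> (real \<Rightarrow> real \<Rightarrow> real) \<Rightarrow> (real \<Rightarrow> real) \<Rightarrow> real \<Rightarrow> real" where
  "meanXt M X p fA t = set_lebesgue_integral lborel {0..} (\<lambda>a. meanX M X a * fAt p fA t a)"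

definition sqmXt :: "'w measure \<Rightarrow> (real \<Rightarrow> 'w \<Rightarrow> nat) \<Rightarrow> (real \<Rightarrow> real \<Rightarrow> real) \<Rightarrow> (real \<Rightarrow> real) \<Rightarrow> real \<Rightarrow> real" where
  "sqmXt M X p fA t = set_lebesgue_integral lborel {0..} (\<lambda>a. sqmX M X a * fAt p fA t a)"

text \<open>Mean and variance of the predator burden Y_t (compound Poisson sum).\<close>
definition meanY :: "'w measure \<Rightarrow> (real \<Rightarrow> 'w \<Rightarrow> nat) \<Rightarrow> (real \<Rightarrow> real \<Rightarrow> real) \<Rightarrow> (real \<Rightarrow> real) \<Rightarrow> (real \<Rightarrow> real) \<Rightarrow> real \<Rightarrow> real" where
  "meanY M X p fA \<phi> t = set_lebesgue_integral lborel {0..t} (\<lambda>s. meanXt M X p fA s * psi \<phi> p fA s)"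

definition varY :: "'w measure \<Rightarrow> (real \<Rightarrow> 'w \<Rightarrow> nat) \<Rightarrow> (real \<Rightarrow> real \<Rightarrow> real) \<Rightarrow> (real \<Rightarrow> real) \<Rightarrow> (real \<Rightarrow> real) \<Rightarrow> real \<Rightarrow> real" where
  "varY M X p fA \<phi> t = set_lebesgue_integral lborel {0..t} (\<lambda>s. sqmXt M X p fA s * psi \<phi> p fA s)"

end

theory Submission
  imports Defs
begin

lemma crossing:
  fixes N :: "'a::linorder measure" and q1 q2 h :: "'a \<Rightarrow> real"
  assumes i1: "integrable N q1" and i2: "integrable N q2"
    and ih1: "integrable N (\<lambda>x. h x * q1 x)" and ih2: "integrable N (\<lambda>x. h x * q2 x)"
    and n1: "\<And>x. x \<in> space N \<Longrightarrow> q1 x \<ge> 0" and n2: "\<And>x. x \<in> space N \<Longrightarrow> q2 x \<ge> 0"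
    and hn: "\<And>x. x \<in> space N \<Longrightarrow> h x \<ge> 0"
    and eq: "integral\<^sup>L N q1 = integral\<^sup>L N q2"
    and mono: "\<And>a b. a \<in> space N \<Longrightarrow> b \<in> space N \<Longrightarrow> a \<le> b \<Longrightarrow> (q1 a > 0 \<or> q2 a > 0)
         \<Longrightarrow> (q1 b > 0 \<or> q2 b > 0) \<Longrightarrow> h a \<le> h b"
    and tp2: "\<And>a b. a \<in> space N \<Longrightarrow> b \<in> space N \<Longrightarrow> a < b \<Longrightarrow> q2 a * q1 b \<le> q2 b * q1 a"
  shows "integral\<^sup>L N (\<lambda>x. h x * q1 x) \<le> integral\<^sup>L N (\<lambda>x. h x * q2 x)"
proof -
  define D where "D x = q2 x - q1 x" for x
  have iD: "integrable N D" unfolding D_def using i1 i2 by auto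
  have ihD: "integrable N (\<lambda>x. h x * D x)" unfolding D_def using ih1 ih2
    by (simp add: right_diff_distrib)
  have eqhD: "integral\<^sup>L N (\<lambda>x. h x * D x) = integral\<^sup>L N (\<lambda>x. h x * q2 x) - integral\<^sup>L N (\<lambda>x. h x * q1 x)"
    unfolding D_def using ih1 ih2 by (simp add: right_diff_distrib)
  have D0: "integral\<^sup>L N D = 0" unfolding D_def using i1 i2 eq by simp
  show ?thesis
  proof (cases "{x \<in> space N. D x > 0} = {}")
    case True
    then have "\<And>x. x \<in> space N \<Longrightarrow> 0 \<le> - D x" by force
    then have "AE x in N. - D x = 0"
      using integral_nonneg_eq_0_iff_AE[of N "\<lambda>x. - D x"] iD D0 by auto
    then have "AE x in N. h x * D x = 0" by auto
    then have "integral\<^sup>L N (\<lambda>x. h x * D x) = 0" by (simp add: integral_eq_zero_AE)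
    then show ?thesis using eqhD by simp
  next
    case False
    define P where "P = {x \<in> space N. D x > 0}"
    define K where "K = Inf (h ` P)"
    have Pne: "P \<noteq> {}" using False P_def by simp
    have bdd: "bdd_below (h ` P)" unfolding P_def using hn by (auto intro!: bdd_belowI[of _ 0])
    have KP: "K \<le> h x" if "x \<in> P" for x unfolding K_def using bdd that by (simp add: cInf_lower)
    have key: "(h x - K) * D x \<ge> 0" if x: "x \<in> space N" for x
    proof (cases "D x > 0")
      case True then show ?thesis using KP[of x] x P_def by simp
    next
      case F: False
      show ?thesis
      proof (cases "D x = 0")
        case True then show ?thesis by simp
      next
        case False
        with F have neg: "q2 x < q1 x" unfolding D_def by simp
        have "h x \<le> h b" if b: "b \<in> P" for b
        proof -
          have bp: "q2 b > q1 b" "b \<in> space N" using b unfolding P_def D_def by auto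
          have "x < b"
          proof (rule ccontr)
            assume "\<not> x < b"
            moreover have "x \<noteq> b" using neg bp by auto
            ultimately have "b < x" by simp
            from tp2[OF bp(2) x this] have t: "q2 b * q1 x \<le> q2 x * q1 b" .
            have "q1 b * q1 x < q2 b * q1 x" using bp neg n2[OF x] by (intro mult_strict_right_mono) auto
            moreover have "q2 x * q1 b \<le> q1 x * q1 b" using neg n1[OF bp(2)] by (intro mult_right_mono) auto
            ultimately show False using t by (simp add: mult.commute)
          qed
          then show ?thesis using mono[OF x bp(2)] neg n2[OF x] bp n1[OF bp(2)] by force
        qed
        then have "h x \<le> K" unfolding K_def using Pne by (auto intro!: cInf_greatest)
        then show ?thesis using neg unfolding D_def by (intro mult_nonpos_nonpos) auto
      qed
    qed
    have "0 \<le> integral\<^sup>L N (\<lambda>x. (h x - K) * D x)" using key by (intro integral_nonneg_AE AE_I2) auto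
    also have "integral\<^sup>L N (\<lambda>x. (h x - K) * D x) = integral\<^sup>L N (\<lambda>x. h x * D x) - K * integral\<^sup>L N D"
      using ihD iD by (simp add: left_diff_distrib)
    finally show ?thesis using D0 eqhD by simp
  qed
qed

lemma nat_le_sq: "real (n::nat) \<le> real n * real n"
  by (metis of_nat_mult of_nat_le_iff le_square)

lemma ext_tp2:
  fixes f g :: "'a::linorder \<Rightarrow> real"
  assumes m: "mono_on S (\<lambda>w. ext_ratio (f w) (g w))"
    and nn: "f a \<ge> 0" "g a \<ge> 0" "f b \<ge> 0" "g b \<ge> 0" and ab: "a \<le> b"
    and Sa: "f a > 0 \<or> g a > 0 \<Longrightarrow> a \<in> S" and Sb: "f b > 0 \<or> g b > 0 \<Longrightarrow> b \<in> S"
  shows "f a * g b \<le> f b * g a"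
proof (cases "f a * g b = 0")
  case True
  have "f b * g a \<ge> 0" using nn by simp
  then show ?thesis using True by linarith
next
  case False
  then have fa: "f a > 0" and gb: "g b > 0" using nn by (auto simp: less_le)
  have "ext_ratio (f a) (g a) \<le> ext_ratio (f b) (g b)"
    using m Sa Sb fa gb ab by (auto simp: mono_on_def)
  then have ga: "g a \<noteq> 0" and le: "f a / g a \<le> f b / g b"
    using gb by (auto simp: ext_ratio_def split: if_splits)
  then have "g a > 0" using nn by simp
  then show ?thesis using le gb by (simp add: field_simps)
qed

locale model =
  fixes M :: "'w measure" and X :: "real \<Rightarrow> 'w \<Rightarrow> nat"
  assumes M: "prob_space M"
    and X_meas: "\<And>r. r \<ge> 0 \<Longrightarrow> X r \<in> measurable M (count_space UNIV)"
    and X_0: "\<And>\<omega>. \<omega> \<in> space M \<Longrightarrow> X 0 \<omega> = 0"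
    and X_mono: "\<And>\<omega> r r'. \<omega> \<in> space M \<Longrightarrow> 0 \<le> r \<Longrightarrow> r \<le> r' \<Longrightarrow> X r \<omega> \<le> X r' \<omega>"
    and X_mom: "\<And>r. r \<ge> 0 \<Longrightarrow> integrable M (\<lambda>\<omega>. (real (X r \<omega>))\<^sup>2)"
    and meanX_pos: "\<And>r. r > 0 \<Longrightarrow> meanX M X r > 0"
    and A: "\<And>s r. 0 \<le> s \<Longrightarrow> s \<le> r \<Longrightarrow> lr_le (pmfX M X s) (pmfX M X r)"
begin

interpretation prob_space M by (rule M)

lemma Xm: "r \<ge> 0 \<Longrightarrow> (\<lambda>\<omega>. real (X r \<omega>)) \<in> borel_measurable M"
  by (rule measurable_compose[OF X_meas]) (auto intro: measurable_count_space)

lemma X_int: "r \<ge> 0 \<Longrightarrow> integrable M (\<lambda>\<omega>. real (X r \<omega>))"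
  apply (rule Bochner_Integration.integrable_bound[OF X_mom])
    apply assumption
   apply (erule Xm)
  apply (auto simp: power2_eq_square nat_le_sq)
  done

lemma meanX_nn: "r \<ge> 0 \<Longrightarrow> meanX M X r \<ge> 0"
  unfolding meanX_def by auto

lemma meanX_le_sqmX: "r \<ge> 0 \<Longrightarrow> meanX M X r \<le> sqmX M X r"
  unfolding meanX_def sqmX_def
  by (intro integral_mono X_int X_mom) (auto simp: power2_eq_square nat_le_sq)

lemma meanX_0: "meanX M X 0 = 0" and sqmX_0: "sqmX M X 0 = 0" and varX_0: "varX M X 0 = 0"
  unfolding varX_def meanX_def sqmX_def by (simp_all add: X_0 cong: Bochner_Integration.integral_cong)

lemma meanX_mono: "0 \<le> s \<Longrightarrow> s \<le> r \<Longrightarrow> meanX M X s \<le> meanX M X r"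
  unfolding meanX_def by (intro integral_mono X_int) (auto intro: X_mono)

lemma varX_eq: "r \<ge> 0 \<Longrightarrow> varX M X r = sqmX M X r - (meanX M X r)\<^sup>2"
proof -
  assume r: "r \<ge> 0"
  define m where "m = meanX M X r"
  have "varX M X r = integral\<^sup>L M (\<lambda>\<omega>. (real (X r \<omega>))\<^sup>2 - 2 * m * real (X r \<omega>) + m^2)"
    unfolding varX_def m_def[symmetric] by (simp add: power2_eq_square algebra_simps)
  also have "\<dots> = sqmX M X r - 2 * m * m + m^2"
    using X_int[OF r] X_mom[OF r] prob_space unfolding sqmX_def m_def meanX_def by simp
  finally show ?thesis unfolding m_def by (simp add: power2_eq_square)
qed

lemma distrX: assumes r: "r \<ge> 0"
  shows "distr M (count_space UNIV) (X r) = density (count_space UNIV) (\<lambda>k. ennreal (pmfX M X r k))"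
proof (rule measure_eqI_countable[where A=UNIV])
  fix a :: nat
  have "emeasure (distr M (count_space UNIV) (X r)) {a} = emeasure M {\<omega> \<in> space M. X r \<omega> = a}"
    using X_meas[OF r] by (subst emeasure_distr) (auto intro!: arg_cong[where f="emeasure M"])
  also have "\<dots> = ennreal (pmfX M X r a)" unfolding pmfX_def by (simp add: emeasure_eq_measure)
  finally show "emeasure (distr M (count_space UNIV) (X r)) {a} =
      emeasure (density (count_space UNIV) (\<lambda>k. ennreal (pmfX M X r k))) {a}"
    by (simp add: emeasure_density nn_integral_count_space_indicator)
qed auto

lemma pmf_rep:
  fixes f :: "nat \<Rightarrow> real"
  assumes r: "r \<ge> 0" and i: "integrable M (\<lambda>\<omega>. f (X r \<omega>))"
  shows "integrable (count_space UNIV) (\<lambda>k. pmfX M X r k * f k)"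
    "integral\<^sup>L (count_space UNIV) (\<lambda>k. pmfX M X r k * f k) = integral\<^sup>L M (\<lambda>\<omega>. f (X r \<omega>))"
proof -
  have pn: "pmfX M X r k \<ge> 0" for k unfolding pmfX_def by simp
  have "integrable (distr M (count_space UNIV) (X r)) f"
    using i X_meas[OF r] by (subst integrable_distr_eq) auto
  then show "integrable (count_space UNIV) (\<lambda>k. pmfX M X r k * f k)"
    unfolding distrX[OF r] using pn by (subst (asm) integrable_density) auto
  have "integral\<^sup>L M (\<lambda>\<omega>. f (X r \<omega>)) = integral\<^sup>L (distr M (count_space UNIV) (X r)) f"
    using X_meas[OF r] by (subst integral_distr) auto
  also have "\<dots> = integral\<^sup>L (count_space UNIV) (\<lambda>k. pmfX M X r k * f k)"
    unfolding distrX[OF r] using pn by (subst integral_density) auto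
  finally show "integral\<^sup>L (count_space UNIV) (\<lambda>k. pmfX M X r k * f k) = integral\<^sup>L M (\<lambda>\<omega>. f (X r \<omega>))" ..
qed

end

context model begin
interpretation prob_space M by (rule M)

lemma pmf_nn: "pmfX M X r k \<ge> 0" unfolding pmfX_def by simp

lemma hX_mono: assumes s: "0 \<le> s" and sr: "s \<le> r"
  shows "sqmX M X s / meanX M X s \<le> sqmX M X r / meanX M X r"
proof (cases "s = 0")
  case True
  have "0 \<le> sqmX M X r / meanX M X r" using sr s True meanX_nn[of r]
    by (intro divide_nonneg_nonneg) (auto simp: sqmX_def)
  then show ?thesis using True sqmX_0 by simp
next
  case False
  then have s0: "s > 0" using s by simp
  then have r0: "r > 0" using sr by simp
  define ms where "ms = meanX M X s"
  define mr where "mr = meanX M X r"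
  have ms: "ms > 0" "mr > 0" using meanX_pos s0 r0 unfolding ms_def mr_def by auto
  note r = less_imp_le[OF r0]
  note i1 = pmf_rep[OF s X_int[OF s]] and i2 = pmf_rep[OF r X_int[OF r]]
  note j1 = pmf_rep[OF s X_mom[OF s]] and j2 = pmf_rep[OF r X_mom[OF r]]
  let ?q1 = "\<lambda>k. pmfX M X s k * real k / ms" and ?q2 = "\<lambda>k. pmfX M X r k * real k / mr"
  have hq1: "(\<lambda>k. real k * ?q1 k) = (\<lambda>k. pmfX M X s k * (real k)\<^sup>2 / ms)"
    by (auto simp: power2_eq_square)
  have hq2: "(\<lambda>k. real k * ?q2 k) = (\<lambda>k. pmfX M X r k * (real k)\<^sup>2 / mr)"
    by (auto simp: power2_eq_square)
  have "integral\<^sup>L (count_space UNIV) (\<lambda>k. real k * ?q1 k) \<le> integral\<^sup>L (count_space UNIV) (\<lambda>k. real k * ?q2 k)"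
  proof (rule crossing)
    show "integrable (count_space UNIV) ?q1" using i1(1) by simp
    show "integrable (count_space UNIV) ?q2" using i2(1) by simp
    show "integrable (count_space UNIV) (\<lambda>k. real k * ?q1 k)" unfolding hq1 using j1(1) by simp
    show "integrable (count_space UNIV) (\<lambda>k. real k * ?q2 k)" unfolding hq2 using j2(1) by simp
    show "integral\<^sup>L (count_space UNIV) ?q1 = integral\<^sup>L (count_space UNIV) ?q2"
      using i1(2) i2(2) ms unfolding ms_def mr_def meanX_def by simp
    fix a b :: nat
    show "0 \<le> ?q1 a" "0 \<le> ?q2 a" "0 \<le> real a" using pmf_nn ms by auto
    show "a \<le> b \<Longrightarrow> real a \<le> real b" by simp
    assume "a < b"
    have "pmfX M X r a * pmfX M X s b \<le> pmfX M X r b * pmfX M X s a"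
      using A[OF s sr] \<open>a < b\<close> pmf_nn unfolding lr_le_def
      by (intro ext_tp2[where S="{w. pmfX M X s w > 0 \<or> pmfX M X r w > 0}"]) auto
    then have "(pmfX M X r a * pmfX M X s b) * (real a * real b / (ms * mr))
             \<le> (pmfX M X r b * pmfX M X s a) * (real a * real b / (ms * mr))"
      using ms by (intro mult_right_mono) auto
    then show "?q2 a * ?q1 b \<le> ?q2 b * ?q1 a" by (simp add: field_simps)
  qed
  moreover have "integral\<^sup>L (count_space UNIV) (\<lambda>k. real k * ?q1 k) = sqmX M X s / ms"
    unfolding hq1 using j1(2) ms unfolding sqmX_def by simp
  moreover have "integral\<^sup>L (count_space UNIV) (\<lambda>k. real k * ?q2 k) = sqmX M X r / mr"
    unfolding hq2 using j2(2) ms unfolding sqmX_def by simp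
  ultimately show ?thesis by (simp only: ms_def mr_def)
qed

end

locale model2 = model M X for M :: "'w measure" and X :: "real \<Rightarrow> 'w \<Rightarrow> nat" +
  fixes fA \<phi> :: "real \<Rightarrow> real" and p :: "real \<Rightarrow> real \<Rightarrow> real"
  assumes fA_meas: "fA \<in> borel_measurable borel"
    and fA_nonneg: "\<And>a. a \<ge> 0 \<Longrightarrow> fA a \<ge> 0"
    and fA_int: "set_integrable lborel {0..} fA"
    and phi_meas: "\<phi> \<in> borel_measurable borel"
    and phi_nonneg: "\<And>s. s \<ge> 0 \<Longrightarrow> \<phi> s \<ge> 0"
    and p_meas: "(\<lambda>x. p (fst x) (snd x)) \<in> borel_measurable borel"
    and p_range: "\<And>u s. u \<ge> 0 \<Longrightarrow> s \<ge> 0 \<Longrightarrow> 0 \<le> p u s \<and> p u s \<le> 1"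
    and psi_int: "\<And>T. T \<ge> 0 \<Longrightarrow> set_integrable lborel {0..T} (psi \<phi> p fA)"
    and Xt_mom: "\<And>s. s \<ge> 0 \<Longrightarrow> set_integrable lborel {0..} (\<lambda>a. sqmX M X a * fAt p fA s a)"
    and Y_mom: "\<And>T. T \<ge> 0 \<Longrightarrow>
                  set_integrable lborel {0..T} (\<lambda>s. sqmXt M X p fA s * psi \<phi> p fA s)"
    and norm_pos: "\<And>s. s \<ge> 0 \<Longrightarrow> cons_norm p fA s > 0"
    and meanXt_pos: "\<And>s. s > 0 \<Longrightarrow> meanXt M X p fA s > 0"
    and Psi_pos: "\<And>T. T > 0 \<Longrightarrow> Psi \<phi> p fA T > 0"
    and meanY_pos: "\<And>T. T > 0 \<Longrightarrow> meanY M X p fA \<phi> T > 0"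
    and B: "\<And>s r. 0 \<le> s \<Longrightarrow> s < r \<Longrightarrow>
              mono_on {u. u \<ge> 0 \<and> (p u s > 0 \<or> p u r > 0)} (\<lambda>u. ext_ratio (p u r) (p u s))"
begin

abbreviation "I a \<equiv> (indicator {0..} a :: real)"
abbreviation "cn \<equiv> cons_norm p fA"
abbreviation "fAt' \<equiv> fAt p fA"
abbreviation "mXt \<equiv> meanXt M X p fA"
abbreviation "sXt \<equiv> sqmXt M X p fA"

definition "hX r = sqmX M X (max r 0) / meanX M X (max r 0)"
definition "mX r = meanX M X (max r 0)"

lemma sqmX_nn: "sqmX M X r \<ge> 0" unfolding sqmX_def by (intro Bochner_Integration.integral_nonneg) auto

lemma hX_nn: "hX r \<ge> 0"
  unfolding hX_def using meanX_nn[of "max r 0"] by (auto simp: sqmX_def intro!: divide_nonneg_nonneg)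

lemma hX_mono': "mono hX"
  unfolding hX_def by (auto intro!: monoI hX_mono)

lemma mX_mono: "mono mX"
  unfolding mX_def by (auto intro!: monoI meanX_mono)

lemma hX_meas: "hX \<in> borel_measurable lborel"
  using borel_measurable_mono[OF hX_mono'] by (simp add: measurable_lborel1)

lemma mX_meas: "mX \<in> borel_measurable lborel"
  using borel_measurable_mono[OF mX_mono] by (simp add: measurable_lborel1)

lemma pP: "(\<lambda>x. p (fst x) (snd x)) \<in> borel_measurable (lborel \<Otimes>\<^sub>M lborel)"
  unfolding lborel_prod using p_meas by (simp add: measurable_lborel1)

lemma pS: "(\<lambda>x. p (snd x) (fst x)) \<in> borel_measurable (lborel \<Otimes>\<^sub>M lborel)"
  using measurable_pair_swap[OF pP] by simp

lemma p_s_meas: "(\<lambda>a. p a s) \<in> borel_measurable lborel"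
proof -
  have "(\<lambda>a. p (fst (a,s)) (snd (a, s))) \<in> borel_measurable lborel"
    by (rule measurable_compose[OF _ pP]) measurable
  then show ?thesis by simp
qed

lemma fA_lb[measurable]: "fA \<in> borel_measurable lborel"
  using fA_meas by (simp add: measurable_lborel1)

lemma fAt_meas: "fAt' s \<in> borel_measurable lborel"
  unfolding fAt_def[abs_def] using p_s_meas[of s] by measurable

lemma fAt_nn: "s \<ge> 0 \<Longrightarrow> a \<ge> 0 \<Longrightarrow> fAt' s a \<ge> 0"
  unfolding fAt_def using p_range[of a s] fA_nonneg[of a] norm_pos[of s] by auto

lemma fA_int': "integrable lborel (\<lambda>a. I a * fA a)"
  using fA_int unfolding set_integrable_def by simp

lemma fAt_int: assumes s: "s \<ge> 0"
  shows "integrable lborel (\<lambda>a. I a * fAt' s a)" "integral\<^sup>L lborel (\<lambda>a. I a * fAt' s a) = 1"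
proof -
  have pf: "integrable lborel (\<lambda>a. I a * (p a s * fA a))"
  proof (rule Bochner_Integration.integrable_bound[OF fA_int'])
    show "(\<lambda>a. I a * (p a s * fA a)) \<in> borel_measurable lborel" using p_s_meas[of s] by measurable
    show "AE x in lborel. norm (I x * (p x s * fA x)) \<le> norm (I x * fA x)"
    proof (intro AE_I2)
      fix x show "norm (I x * (p x s * fA x)) \<le> norm (I x * fA x)"
      proof (cases "x \<ge> 0")
        case True
        have "p x s * fA x \<le> fA x" "0 \<le> p x s * fA x"
          using p_range[OF True s] fA_nonneg[OF True] by (auto intro: mult_left_le_one_le)
        then show ?thesis using True by simp
      qed simp
    qed
  qed
  have e: "(\<lambda>a. I a * fAt' s a) = (\<lambda>a. I a * (p a s * fA a) / cn s)"
    unfolding fAt_def by auto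
  show "integrable lborel (\<lambda>a. I a * fAt' s a)" unfolding e using pf by simp
  show "integral\<^sup>L lborel (\<lambda>a. I a * fAt' s a) = 1" unfolding e using norm_pos[OF s]
    by (simp add: cons_norm_def set_lebesgue_integral_def)
qed

lemma sfAt_int: "s \<ge> 0 \<Longrightarrow> integrable lborel (\<lambda>a. I a * sqmX M X a * fAt' s a)"
  using Xt_mom unfolding set_integrable_def by (simp add: mult.assoc)

lemma sXt_eq: "sXt s = integral\<^sup>L lborel (\<lambda>a. I a * sqmX M X a * fAt' s a)"
  unfolding sqmXt_def set_lebesgue_integral_def by (simp add: mult.assoc)

lemma mXt_eq: "mXt s = integral\<^sup>L lborel (\<lambda>a. I a * meanX M X a * fAt' s a)"
  unfolding meanXt_def set_lebesgue_integral_def by (simp add: mult.assoc)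

lemma IX: "I a * meanX M X a = I a * mX a" "I a * sqmX M X a = I a * sqmX M X (max a 0)"
  unfolding mX_def by (auto simp: indicator_def)

lemma mfAt_int: assumes s: "s \<ge> 0"
  shows "integrable lborel (\<lambda>a. I a * meanX M X a * fAt' s a)"
proof (rule Bochner_Integration.integrable_bound[OF sfAt_int[OF s]])
  show "(\<lambda>a. I a * meanX M X a * fAt' s a) \<in> borel_measurable lborel"
    unfolding IX using mX_meas fAt_meas[of s] by measurable
  show "AE x in lborel. norm (I x * meanX M X x * fAt' s x) \<le> norm (I x * sqmX M X x * fAt' s x)"
  proof (intro AE_I2)
    fix x show "norm (I x * meanX M X x * fAt' s x) \<le> norm (I x * sqmX M X x * fAt' s x)"
    proof (cases "x \<ge> 0")
      case True
      then have "meanX M X x * fAt' s x \<le> sqmX M X x * fAt' s x"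
        using meanX_le_sqmX fAt_nn[OF s] by (intro mult_right_mono) auto
      then show ?thesis using True meanX_nn[OF True] fAt_nn[OF s True] sqmX_nn[of x]
        by (simp add: abs_mult)
    qed simp
  qed
qed

lemma mXt_le: "s \<ge> 0 \<Longrightarrow> mXt s \<le> sXt s"
  unfolding mXt_eq sXt_eq using meanX_le_sqmX fAt_nn
  by (intro integral_mono mfAt_int sfAt_int) (auto simp: indicator_def mult_right_mono)

lemma mXt_nn: "s \<ge> 0 \<Longrightarrow> mXt s \<ge> 0"
  unfolding mXt_eq using meanX_nn fAt_nn
  by (intro Bochner_Integration.integral_nonneg) (auto simp: indicator_def)

lemma sXt_nn: "s \<ge> 0 \<Longrightarrow> sXt s \<ge> 0"
  using mXt_le mXt_nn by (meson order_trans)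

lemma tp2p: assumes "0 \<le> a" "a \<le> b" "0 \<le> s" "s \<le> r"
  shows "p a r * p b s \<le> p b r * p a s"
proof (cases "s = r")
  case True then show ?thesis by (simp add: mult.commute)
next
  case False
  then have "s < r" using assms by simp
  have r0: "0 \<le> r" using assms by linarith
  have b0: "0 \<le> b" using assms by linarith
  note pr = p_range[OF assms(1) assms(3)] p_range[OF assms(1) r0] p_range[OF b0 assms(3)] p_range[OF b0 r0]
  let ?S = "{u. 0 \<le> u \<and> (0 < p u s \<or> 0 < p u r)}"
  have m: "mono_on ?S (\<lambda>u. ext_ratio (p u r) (p u s))" using B[OF \<open>0 \<le> s\<close> \<open>s < r\<close>] by simp
  have Sa: "a \<in> ?S" if "p a r > 0 \<or> p a s > 0" using that assms(1) by blast
  have Sb: "b \<in> ?S" if "p b r > 0 \<or> p b s > 0" using that b0 by blast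
  show ?thesis
    using ext_tp2[of ?S "\<lambda>u. p u r" "\<lambda>u. p u s" a b, OF m _ _ _ _ assms(2) Sa Sb] pr by linarith
qed

lemma fAt_tp2: assumes "0 \<le> a" "a \<le> b" "0 \<le> s" "s \<le> r"
  shows "fAt' r a * fAt' s b \<le> fAt' r b * fAt' s a"
proof -
  have c: "cn r > 0" "cn s > 0" using norm_pos assms by auto
  have f: "fA a \<ge> 0" "fA b \<ge> 0" using fA_nonneg assms by auto
  have "(p a r * p b s) * (fA a * fA b) \<le> (p b r * p a s) * (fA a * fA b)"
    using tp2p[OF assms] f by (intro mult_right_mono) auto
  then have "(p a r * fA a) * (p b s * fA b) \<le> (p b r * fA b) * (p a s * fA a)"
    by (simp only: ac_simps)
  then have "(p a r * fA a) * (p b s * fA b) / (cn r * cn s) \<le> (p b r * fA b) * (p a s * fA a) / (cn r * cn s)"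
    using c by (intro divide_right_mono) auto
  then show ?thesis unfolding fAt_def by simp
qed

end

context model2 begin

lemma Ifat_nn: "s \<ge> 0 \<Longrightarrow> I a * fAt' s a \<ge> 0"
  using fAt_nn by (auto simp: indicator_def)

lemma Imfat_nn: "s \<ge> 0 \<Longrightarrow> I a * meanX M X a * fAt' s a \<ge> 0"
  using fAt_nn meanX_nn by (auto simp: indicator_def)

lemma hXm: "a \<ge> 0 \<Longrightarrow> hX a * meanX M X a = sqmX M X a"
proof -
  assume a: "a \<ge> 0"
  show ?thesis
  proof (cases "a = 0")
    case True then show ?thesis using sqmX_0 meanX_0 by (simp add: hX_def)
  next
    case False
    then have "meanX M X a > 0" using a meanX_pos by simp
    then show ?thesis using a by (simp add: hX_def)
  qed
qed

lemma hX_I: "hX a * (I a * meanX M X a * f a / c) = I a * sqmX M X a * f a / c"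
  using hXm[of a] by (cases "a \<ge> 0") (auto simp: indicator_def)

lemma mX_I: "mX a * (I a * f a) = I a * meanX M X a * f a"
  by (auto simp: indicator_def mX_def)

lemma mXt_mono: assumes s: "0 \<le> s" and sr: "s \<le> r"
  shows "mXt s \<le> mXt r"
proof -
  have r: "0 \<le> r" using s sr by simp
  have "integral\<^sup>L lborel (\<lambda>a. mX a * (I a * fAt' s a)) \<le> integral\<^sup>L lborel (\<lambda>a. mX a * (I a * fAt' r a))"
  proof (rule crossing)
    show "integrable lborel (\<lambda>a. I a * fAt' s a)" "integrable lborel (\<lambda>a. I a * fAt' r a)"
      using fAt_int s r by auto
    show "integrable lborel (\<lambda>a. mX a * (I a * fAt' s a))" "integrable lborel (\<lambda>a. mX a * (I a * fAt' r a))"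
      unfolding mX_I using mfAt_int s r by auto
    show "integral\<^sup>L lborel (\<lambda>a. I a * fAt' s a) = integral\<^sup>L lborel (\<lambda>a. I a * fAt' r a)"
      using fAt_int s r by simp
    fix a b :: real
    show "0 \<le> I a * fAt' s a" "0 \<le> I a * fAt' r a" using Ifat_nn s r by auto
    show "0 \<le> mX a" unfolding mX_def by (rule meanX_nn) simp
    show "a \<le> b \<Longrightarrow> mX a \<le> mX b" using mX_mono by (simp add: mono_def)
    assume ab: "a < b"
    show "I a * fAt' r a * (I b * fAt' s b) \<le> I b * fAt' r b * (I a * fAt' s a)"
    proof (cases "a \<ge> 0")
      case True
      then show ?thesis using fAt_tp2[OF True less_imp_le[OF ab] s sr] ab by simp
    qed simp
  qed
  then show ?thesis unfolding mX_I mXt_eq .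
qed

lemma g_mono: assumes s: "0 \<le> s" and sr: "s \<le> r"
  shows "sXt s / mXt s \<le> sXt r / mXt r"
proof (cases "s = r")
  case False
  then have r0: "r > 0" using s sr by simp
  then have r: "r \<ge> 0" by simp
  have mr: "mXt r > 0" using meanXt_pos r0 by simp
  show ?thesis
  proof (cases "mXt s = 0")
    case True then show ?thesis using sXt_nn[OF r] mr by simp
  next
    case False
    then have ms: "mXt s > 0" using mXt_nn[OF s] by simp
    have "integral\<^sup>L lborel (\<lambda>a. hX a * (I a * meanX M X a * fAt' s a / mXt s))
        \<le> integral\<^sup>L lborel (\<lambda>a. hX a * (I a * meanX M X a * fAt' r a / mXt r))"
    proof (rule crossing)
      show "integrable lborel (\<lambda>a. I a * meanX M X a * fAt' s a / mXt s)"
           "integrable lborel (\<lambda>a. I a * meanX M X a * fAt' r a / mXt r)"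
        using mfAt_int s r by auto
      show "integrable lborel (\<lambda>a. hX a * (I a * meanX M X a * fAt' s a / mXt s))"
           "integrable lborel (\<lambda>a. hX a * (I a * meanX M X a * fAt' r a / mXt r))"
        unfolding hX_I using sfAt_int s r by auto
      show "integral\<^sup>L lborel (\<lambda>a. I a * meanX M X a * fAt' s a / mXt s) =
            integral\<^sup>L lborel (\<lambda>a. I a * meanX M X a * fAt' r a / mXt r)"
        using ms mr by (simp add: mXt_eq[symmetric])
      fix a b :: real
      show "0 \<le> I a * meanX M X a * fAt' s a / mXt s" "0 \<le> I a * meanX M X a * fAt' r a / mXt r"
        using Imfat_nn s r ms mr by auto
      show "0 \<le> hX a" by (rule hX_nn)
      show "a \<le> b \<Longrightarrow> hX a \<le> hX b" using hX_mono' by (simp add: mono_def)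
      assume ab: "a < b"
      show "I a * meanX M X a * fAt' r a / mXt r * (I b * meanX M X b * fAt' s b / mXt s)
          \<le> I b * meanX M X b * fAt' r b / mXt r * (I a * meanX M X a * fAt' s a / mXt s)"
      proof (cases "a \<ge> 0")
        case True
        have b: "b \<ge> 0" using True ab by simp
        have "(fAt' r a * fAt' s b) * (meanX M X a * meanX M X b / (mXt r * mXt s))
            \<le> (fAt' r b * fAt' s a) * (meanX M X a * meanX M X b / (mXt r * mXt s))"
          using fAt_tp2[OF True less_imp_le[OF ab] s sr] meanX_nn[OF True] meanX_nn[OF b] ms mr
          by (intro mult_right_mono) auto
        then show ?thesis using True b by (simp add: ac_simps)
      qed simp
    qed
    then show ?thesis unfolding hX_I using ms mr by (simp add: sXt_eq)
  qed
qed simp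

lemma hX_bound: "a \<ge> 0 \<Longrightarrow> hX a \<le> hX 1 + sqmX M X a / meanX M X 1"
proof -
  assume a: "a \<ge> 0"
  have m1: "meanX M X 1 > 0" using meanX_pos by simp
  have sq: "sqmX M X a / meanX M X 1 \<ge> 0" using sqmX_nn m1 by simp
  show ?thesis
  proof (cases "a \<le> 1")
    case True
    then have "hX a \<le> hX 1" using hX_mono' by (simp add: mono_def)
    then show ?thesis using sq by simp
  next
    case False
    have "meanX M X 1 \<le> meanX M X a" using False by (intro meanX_mono) auto
    then have "sqmX M X a / meanX M X a \<le> sqmX M X a / meanX M X 1"
      using m1 sqmX_nn by (intro divide_left_mono) auto
    then show ?thesis using a hX_nn[of 1] by (simp add: hX_def)
  qed
qed

lemma hfAt_int: assumes s: "s \<ge> 0"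
  shows "integrable lborel (\<lambda>a. hX a * (I a * fAt' s a))"
proof (rule Bochner_Integration.integrable_bound)
  show "integrable lborel (\<lambda>a. hX 1 * (I a * fAt' s a) + (I a * sqmX M X a * fAt' s a) / meanX M X 1)"
    using fAt_int[OF s] sfAt_int[OF s] by auto
  show "(\<lambda>a. hX a * (I a * fAt' s a)) \<in> borel_measurable lborel"
    using hX_meas fAt_meas[of s] by measurable
  show "AE x in lborel. norm (hX x * (I x * fAt' s x)) \<le> norm (hX 1 * (I x * fAt' s x) + (I x * sqmX M X x * fAt' s x) / meanX M X 1)"
  proof (intro AE_I2)
    fix x show "norm (hX x * (I x * fAt' s x)) \<le> norm (hX 1 * (I x * fAt' s x) + (I x * sqmX M X x * fAt' s x) / meanX M X 1)"
    proof (cases "x \<ge> 0")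
      case True
      have f: "fAt' s x \<ge> 0" using fAt_nn[OF s True] .
      have m1: "meanX M X 1 > 0" using meanX_pos by simp
      have "hX x * fAt' s x \<le> (hX 1 + sqmX M X x / meanX M X 1) * fAt' s x"
        using hX_bound[OF True] f by (intro mult_right_mono) auto
      moreover have "0 \<le> hX x * fAt' s x" using hX_nn f by simp
      ultimately show ?thesis using True by (simp add: algebra_simps)
    qed simp
  qed
qed

lemma hfAt_le: assumes s: "s > 0"
  shows "integral\<^sup>L lborel (\<lambda>a. hX a * (I a * fAt' s a)) \<le> sXt s / mXt s"
proof -
  have s0: "s \<ge> 0" using s by simp
  have ms: "mXt s > 0" using meanXt_pos s by simp
  have "integral\<^sup>L lborel (\<lambda>a. hX a * (I a * fAt' s a))
        \<le> integral\<^sup>L lborel (\<lambda>a. hX a * (I a * meanX M X a * fAt' s a / mXt s))"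
  proof (rule crossing)
    show "integrable lborel (\<lambda>a. I a * fAt' s a)" using fAt_int s0 by auto
    show "integrable lborel (\<lambda>a. I a * meanX M X a * fAt' s a / mXt s)"
      using mfAt_int s0 by auto
    show "integrable lborel (\<lambda>a. hX a * (I a * fAt' s a))" using hfAt_int[OF s0] .
    show "integrable lborel (\<lambda>a. hX a * (I a * meanX M X a * fAt' s a / mXt s))"
      unfolding hX_I using sfAt_int s0 by auto
    show "integral\<^sup>L lborel (\<lambda>a. I a * fAt' s a) =
          integral\<^sup>L lborel (\<lambda>a. I a * meanX M X a * fAt' s a / mXt s)"
      using ms fAt_int[OF s0] by (simp add: mXt_eq[symmetric])
    fix a b :: real
    show "0 \<le> I a * fAt' s a" "0 \<le> I a * meanX M X a * fAt' s a / mXt s"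
      using Imfat_nn Ifat_nn s0 ms by auto
    show "0 \<le> hX a" by (rule hX_nn)
    show "a \<le> b \<Longrightarrow> hX a \<le> hX b" using hX_mono' by (simp add: mono_def)
    assume ab: "a < b"
    show "I a * meanX M X a * fAt' s a / mXt s * (I b * fAt' s b)
        \<le> I b * meanX M X b * fAt' s b / mXt s * (I a * fAt' s a)"
    proof (cases "a \<ge> 0")
      case True
      have b: "b \<ge> 0" using True ab by simp
      have "meanX M X a * (fAt' s a * fAt' s b / mXt s) \<le> meanX M X b * (fAt' s a * fAt' s b / mXt s)"
        using meanX_mono[OF True less_imp_le[OF ab]] fAt_nn[OF s0 True] fAt_nn[OF s0 b] ms
        by (intro mult_right_mono) auto
      then show ?thesis using True b by (simp add: ac_simps)
    qed simp
  qed
  then show ?thesis unfolding hX_I using ms by (simp add: sXt_eq)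
qed

end

context model2 begin

abbreviation "ps \<equiv> psi \<phi> p fA"
definition "gg s = sXt (max s 0) / mXt (max s 0)"

lemma psi_nn: "s \<ge> 0 \<Longrightarrow> ps s \<ge> 0"
  unfolding psi_def using phi_nonneg norm_pos[of s] by simp

lemma gg_mono: "mono gg"
  unfolding gg_def by (auto intro!: monoI g_mono)

lemma gg_nn: "gg s \<ge> 0"
  unfolding gg_def using sXt_nn mXt_nn by simp

lemma gg_meas: "gg \<in> borel_measurable lborel"
  using borel_measurable_mono[OF gg_mono] by (simp add: measurable_lborel1)

lemma gg_eq: "s \<ge> 0 \<Longrightarrow> gg s = sXt s / mXt s"
  unfolding gg_def by simp

context fixes t :: real assumes t: "t > 0" begin

abbreviation "J s \<equiv> (indicator {0..t} s :: real)"

lemma Jpsi_int: "integrable lborel (\<lambda>s. J s * ps s)"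
  using psi_int[of t] t unfolding set_integrable_def by simp

lemma Psi_eq: "Psi \<phi> p fA t = integral\<^sup>L lborel (\<lambda>s. J s * ps s)"
  unfolding Psi_def set_lebesgue_integral_def by simp

lemma varY_eq: "varY M X p fA \<phi> t = integral\<^sup>L lborel (\<lambda>s. J s * (sXt s * ps s))"
  unfolding varY_def set_lebesgue_integral_def by simp

lemma sY_int: "integrable lborel (\<lambda>s. J s * (sXt s * ps s))"
  using Y_mom[of t] t unfolding set_integrable_def by simp

lemma meanY_eq: "meanY M X p fA \<phi> t = integral\<^sup>L lborel (\<lambda>s. J s * (mXt s * ps s))"
  unfolding meanY_def set_lebesgue_integral_def by simp

lemma mY_int: "integrable lborel (\<lambda>s. J s * (mXt s * ps s))"
proof (rule ccontr)
  assume "\<not> ?thesis"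
  then have "meanY M X p fA \<phi> t = 0" unfolding meanY_eq by (rule not_integrable_integral_eq)
  then show False using meanY_pos[OF t] by simp
qed

lemma J_nn: "J s * ps s \<ge> 0" using psi_nn by (auto simp: indicator_def)

lemma claim1: "varY M X p fA \<phi> t / meanY M X p fA \<phi> t \<le> sXt t / mXt t"
proof -
  have "integral\<^sup>L lborel (\<lambda>s. J s * (sXt s * ps s)) \<le> integral\<^sup>L lborel (\<lambda>s. gg t * (J s * (mXt s * ps s)))"
  proof (rule integral_mono_AE)
    show "integrable lborel (\<lambda>s. J s * (sXt s * ps s))" by (rule sY_int)
    show "integrable lborel (\<lambda>s. gg t * (J s * (mXt s * ps s)))" using mY_int by simp
    show "AE s in lborel. J s * (sXt s * ps s) \<le> gg t * (J s * (mXt s * ps s))"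
      using AE_lborel_singleton[of 0]
    proof (rule eventually_mono)
      fix s :: real assume s0: "s \<noteq> 0"
      show "J s * (sXt s * ps s) \<le> gg t * (J s * (mXt s * ps s))"
      proof (cases "s \<in> {0..t}")
        case True
        then have s: "s > 0" "s \<le> t" using s0 by auto
        have m: "mXt s > 0" using meanXt_pos s by simp
        have "sXt s / mXt s \<le> gg t" using g_mono[of s t] s t by (simp add: gg_eq)
        then have "sXt s \<le> gg t * mXt s" using m by (simp add: field_simps)
        then have "sXt s * ps s \<le> (gg t * mXt s) * ps s" using psi_nn[of s] s by (intro mult_right_mono) auto
        then show ?thesis using True by simp
      qed simp
    qed
  qed
  then have "varY M X p fA \<phi> t \<le> gg t * meanY M X p fA \<phi> t"
    unfolding varY_eq meanY_eq by simp
  then show ?thesis using meanY_pos[OF t] t by (simp add: divide_le_eq gg_eq mult.commute)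
qed

end
end

context model2 begin

context fixes t :: real assumes t: "t > 0" begin

lemma gq1_int: "integrable lborel (\<lambda>s. gg s * (J t s * ps s / Psi \<phi> p fA t))"
proof (rule Bochner_Integration.integrable_bound)
  show "integrable lborel (\<lambda>s. gg t * (J t s * ps s / Psi \<phi> p fA t))" using Jpsi_int[OF t] by simp
  have [measurable]: "(\<lambda>s. J t s * ps s) \<in> borel_measurable lborel"
    by (rule borel_measurable_integrable[OF Jpsi_int[OF t]])
  have [measurable]: "gg \<in> borel_measurable lborel" by (rule gg_meas)
  show "(\<lambda>s. gg s * (J t s * ps s / Psi \<phi> p fA t)) \<in> borel_measurable lborel" by measurable
  show "AE s in lborel. norm (gg s * (J t s * ps s / Psi \<phi> p fA t)) \<le> norm (gg t * (J t s * ps s / Psi \<phi> p fA t))"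
  proof (intro AE_I2)
    fix s show "norm (gg s * (J t s * ps s / Psi \<phi> p fA t)) \<le> norm (gg t * (J t s * ps s / Psi \<phi> p fA t))"
    proof (cases "s \<in> {0..t}")
      case True
      have "gg s \<le> gg t" using True gg_mono by (auto simp: mono_def)
      moreover have "ps s / Psi \<phi> p fA t \<ge> 0" using psi_nn True Psi_pos[OF t] by auto
      ultimately have "gg s * (ps s / Psi \<phi> p fA t) \<le> gg t * (ps s / Psi \<phi> p fA t)"
        by (intro mult_right_mono) auto
      then show ?thesis using True gg_nn[of s] gg_nn[of t] psi_nn[of s] Psi_pos[OF t] by (simp add: abs_mult)
    qed simp
  qed
qed

lemma gq2_int: "integrable lborel (\<lambda>s. gg s * (J t s * (mXt s * ps s) / meanY M X p fA \<phi> t))"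
proof (rule Bochner_Integration.integrable_bound)
  show "integrable lborel (\<lambda>s. gg t * (J t s * (mXt s * ps s) / meanY M X p fA \<phi> t))" using mY_int[OF t] by simp
  have [measurable]: "(\<lambda>s. J t s * (mXt s * ps s)) \<in> borel_measurable lborel"
    by (rule borel_measurable_integrable[OF mY_int[OF t]])
  have [measurable]: "gg \<in> borel_measurable lborel" by (rule gg_meas)
  show "(\<lambda>s. gg s * (J t s * (mXt s * ps s) / meanY M X p fA \<phi> t)) \<in> borel_measurable lborel" by measurable
  show "AE s in lborel. norm (gg s * (J t s * (mXt s * ps s) / meanY M X p fA \<phi> t))
       \<le> norm (gg t * (J t s * (mXt s * ps s) / meanY M X p fA \<phi> t))"
  proof (intro AE_I2)
    fix s show "norm (gg s * (J t s * (mXt s * ps s) / meanY M X p fA \<phi> t))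
       \<le> norm (gg t * (J t s * (mXt s * ps s) / meanY M X p fA \<phi> t))"
    proof (cases "s \<in> {0..t}")
      case True
      have "gg s \<le> gg t" using True gg_mono by (auto simp: mono_def)
      moreover have "mXt s * ps s / meanY M X p fA \<phi> t \<ge> 0" using psi_nn mXt_nn True meanY_pos[OF t] by auto
      ultimately have "gg s * (mXt s * ps s / meanY M X p fA \<phi> t) \<le> gg t * (mXt s * ps s / meanY M X p fA \<phi> t)"
        by (intro mult_right_mono) auto
      then show ?thesis using True gg_nn[of s] gg_nn[of t] psi_nn[of s] mXt_nn[of s] meanY_pos[OF t] by (simp add: abs_mult)
    qed simp
  qed
qed

lemma claim2: "(1 / Psi \<phi> p fA t) * set_lebesgue_integral lborel {0..t} (\<lambda>s. (sXt s / mXt s) * ps s)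
    \<le> varY M X p fA \<phi> t / meanY M X p fA \<phi> t"
proof -
  define Ps where "Ps = Psi \<phi> p fA t"
  define mY where "mY = meanY M X p fA \<phi> t"
  have Ps: "Ps > 0" using Psi_pos[OF t] Ps_def by simp
  have mY: "mY > 0" using meanY_pos[OF t] mY_def by simp
  have "integral\<^sup>L lborel (\<lambda>s. gg s * (J t s * ps s / Ps))
      \<le> integral\<^sup>L lborel (\<lambda>s. gg s * (J t s * (mXt s * ps s) / mY))"
  proof (rule crossing)
    show "integrable lborel (\<lambda>s. J t s * ps s / Ps)" using Jpsi_int[OF t] by simp
    show "integrable lborel (\<lambda>s. J t s * (mXt s * ps s) / mY)" using mY_int[OF t] by simp
    show "integrable lborel (\<lambda>s. gg s * (J t s * ps s / Ps))" using gq1_int Ps_def by simp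
    show "integrable lborel (\<lambda>s. gg s * (J t s * (mXt s * ps s) / mY))" using gq2_int mY_def by simp
    show "integral\<^sup>L lborel (\<lambda>s. J t s * ps s / Ps) = integral\<^sup>L lborel (\<lambda>s. J t s * (mXt s * ps s) / mY)"
      using Ps mY unfolding Ps_def mY_def by (simp add: Psi_eq[OF t, symmetric] meanY_eq[OF t, symmetric])
    fix a b :: real
    show "0 \<le> J t a * ps a / Ps" using J_nn[OF t] Ps by simp
    show "0 \<le> J t a * (mXt a * ps a) / mY" using mXt_nn psi_nn mY by (auto simp: indicator_def)
    show "0 \<le> gg a" by (rule gg_nn)
    show "a \<le> b \<Longrightarrow> gg a \<le> gg b" using gg_mono by (simp add: mono_def)
    assume ab: "a < b"
    show "J t a * (mXt a * ps a) / mY * (J t b * ps b / Ps) \<le> J t b * (mXt b * ps b) / mY * (J t a * ps a / Ps)"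
    proof (cases "a \<in> {0..t} \<and> b \<in> {0..t}")
      case True
      have "mXt a * (ps a * ps b / (mY * Ps)) \<le> mXt b * (ps a * ps b / (mY * Ps))"
        using True ab mXt_mono[of a b] psi_nn[of a] psi_nn[of b] mY Ps by (intro mult_right_mono) auto
      then show ?thesis using True by (simp add: ac_simps)
    next
      case False
      then show ?thesis by (auto simp: indicator_def)
    qed
  qed
  note cross = this
  have e1: "(\<lambda>s. gg s * (J t s * ps s / Ps)) = (\<lambda>s. J t s * (sXt s / mXt s * ps s) / Ps)"
    by (auto simp: indicator_def gg_eq)
  have L: "integral\<^sup>L lborel (\<lambda>s. gg s * (J t s * ps s / Ps))
     = (1 / Ps) * set_lebesgue_integral lborel {0..t} (\<lambda>s. (sXt s / mXt s) * ps s)"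
    unfolding e1 integral_divide_zero set_lebesgue_integral_def by simp
  have e2: "integral\<^sup>L lborel (\<lambda>s. gg s * (J t s * (mXt s * ps s) / mY))
      = integral\<^sup>L lborel (\<lambda>s. J t s * (sXt s * ps s) / mY)"
  proof (rule integral_cong_AE)
    show "(\<lambda>s. gg s * (J t s * (mXt s * ps s) / mY)) \<in> borel_measurable lborel"
      using gq2_int mY_def by (simp add: borel_measurable_integrable)
    show "(\<lambda>s. J t s * (sXt s * ps s) / mY) \<in> borel_measurable lborel"
      using sY_int[OF t] by (simp add: borel_measurable_integrable)
    show "AE s in lborel. gg s * (J t s * (mXt s * ps s) / mY) = J t s * (sXt s * ps s) / mY"
      using AE_lborel_singleton[of 0]
    proof (rule eventually_mono)
      fix s :: real assume "s \<noteq> 0"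
      then show "gg s * (J t s * (mXt s * ps s) / mY) = J t s * (sXt s * ps s) / mY"
        using meanXt_pos[of s] by (cases "s \<in> {0..t}") (auto simp: gg_eq)
    qed
  qed
  have R: "integral\<^sup>L lborel (\<lambda>s. gg s * (J t s * (mXt s * ps s) / mY)) = varY M X p fA \<phi> t / mY"
    unfolding e2 varY_eq[OF t] by simp
  have "(1 / Ps) * set_lebesgue_integral lborel {0..t} (\<lambda>s. (sXt s / mXt s) * ps s) \<le> varY M X p fA \<phi> t / mY"
    using cross L R by linarith
  then show ?thesis unfolding Ps_def mY_def .
qed

end
end

context model2 begin

lemma pP_m[measurable]: "(\<lambda>x. p (fst x) (snd x)) \<in> borel_measurable (lborel \<Otimes>\<^sub>M lborel)"
  by (rule pP)
lemma pS_m[measurable]: "(\<lambda>x. p (snd x) (fst x)) \<in> borel_measurable (lborel \<Otimes>\<^sub>M lborel)"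
  by (rule pS)

lemma cn_meas[measurable]: "cn \<in> borel_measurable lborel"
proof -
  have "(\<lambda>(s, u). indicator {0..} u *\<^sub>R (p u s * fA u) :: real) \<in> borel_measurable (lborel \<Otimes>\<^sub>M lborel)"
    unfolding case_prod_beta by measurable
  from lborel.borel_measurable_lebesgue_integral[OF this]
  show ?thesis unfolding cons_norm_def[abs_def] set_lebesgue_integral_def .
qed

lemma phi_lb[measurable]: "\<phi> \<in> borel_measurable lborel"
  using phi_meas by (simp add: measurable_lborel1)

lemma ps_meas[measurable]: "ps \<in> borel_measurable lborel"
  unfolding psi_def[abs_def] by measurable

lemma hX_m[measurable]: "hX \<in> borel_measurable lborel" by (rule hX_meas)

lemma vm: "r \<ge> 0 \<Longrightarrow> varX M X r / meanX M X r + meanX M X r = hX r"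
proof -
  assume r: "r \<ge> 0"
  show ?thesis
  proof (cases "r = 0")
    case True then show ?thesis by (simp add: varX_0 meanX_0 hX_def sqmX_0)
  next
    case False
    then have m: "meanX M X r > 0" using r meanX_pos by simp
    show ?thesis using m r by (simp add: varX_eq hX_def field_simps power2_eq_square)
  qed
qed

context fixes t :: real assumes t: "t > 0" begin

definition "H r s = hX r * I r * (J t s * (fAt' s r * ps s))"

lemma H_meas: "(\<lambda>x. H (fst x) (snd x)) \<in> borel_measurable (lborel \<Otimes>\<^sub>M lborel)"
  unfolding H_def fAt_def by measurable

lemma H_nn: "H r s \<ge> 0"
  unfolding H_def using hX_nn fAt_nn psi_nn by (auto simp: indicator_def)

lemma claim3: "set_lebesgue_integral lborel {0..}
              (\<lambda>r. (varX M X r / meanX M X r + meanX M X r) *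
                   ((1 / Psi \<phi> p fA t) * set_lebesgue_integral lborel {0..t}
                      (\<lambda>s. fAt' s r * ps s)))
      \<le> (1 / Psi \<phi> p fA t) * set_lebesgue_integral lborel {0..t} (\<lambda>s. (sXt s / mXt s) * ps s)"
proof -
  define Ps where "Ps = Psi \<phi> p fA t"
  have Ps: "Ps > 0" using Psi_pos[OF t] Ps_def by simp
  define W where "W r = integral\<^sup>L lborel (\<lambda>s. J t s * (fAt' s r * ps s))" for r
  define F where "F r = hX r * I r * ((1 / Ps) * W r)" for r
  define SL where "SL = integral\<^sup>L lborel (\<lambda>s. J t s * (sXt s / mXt s * ps s))"
  have SLint: "integrable lborel (\<lambda>s. J t s * (sXt s / mXt s * ps s))"
  proof -
    have "integrable lborel (\<lambda>s. Ps * (gg s * (J t s * ps s / Ps)))"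
      by (rule Bochner_Integration.integrable_mult_right) (use gq1_int[OF t] in \<open>simp only: Ps_def\<close>)
    moreover have "(\<lambda>s. Ps * (gg s * (J t s * ps s / Ps))) = (\<lambda>s. J t s * (sXt s / mXt s * ps s))"
      using Ps by (auto simp: indicator_def gg_eq)
    ultimately show ?thesis by simp
  qed
  have SL_nn: "SL \<ge> 0" unfolding SL_def using sXt_nn mXt_nn psi_nn
    by (intro Bochner_Integration.integral_nonneg) (auto simp: indicator_def)
  have lhs: "set_lebesgue_integral lborel {0..}
              (\<lambda>r. (varX M X r / meanX M X r + meanX M X r) *
                   ((1 / Psi \<phi> p fA t) * set_lebesgue_integral lborel {0..t}
                      (\<lambda>s. fAt' s r * ps s))) = integral\<^sup>L lborel F"
    unfolding set_lebesgue_integral_def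
    by (intro Bochner_Integration.integral_cong refl) (auto simp: F_def W_def vm indicator_def Ps_def set_lebesgue_integral_def)
  have rhs: "(1 / Psi \<phi> p fA t) * set_lebesgue_integral lborel {0..t} (\<lambda>s. (sXt s / mXt s) * ps s) = (1/Ps) * SL"
    unfolding SL_def Ps_def set_lebesgue_integral_def by simp
  have W_nn: "r \<ge> 0 \<Longrightarrow> W r \<ge> 0" for r unfolding W_def using fAt_nn psi_nn
    by (intro Bochner_Integration.integral_nonneg) (auto simp: indicator_def)
  have F_nn: "F r \<ge> 0" for r unfolding F_def using W_nn[of r] hX_nn[of r] Ps by (auto simp: indicator_def)
  show ?thesis
  proof (cases "integrable lborel F")
    case False
    then show ?thesis unfolding lhs rhs using not_integrable_integral_eq[OF False] SL_nn Ps by simp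
  next
    case True
    have step3: "ennreal (F r) \<le> ennreal (1 / Ps) * (\<integral>\<^sup>+ s. ennreal (H r s) \<partial>lborel)" for r
    proof (cases "r \<ge> 0")
      case False then show ?thesis by (simp add: F_def)
    next
      case r: True
      have wm: "(\<lambda>s. J t s * (fAt' s r * ps s)) \<in> borel_measurable lborel"
      proof -
        have "(\<lambda>s. p (fst (r, s)) (snd (r, s))) \<in> borel_measurable lborel"
          by (rule measurable_compose[OF _ pP]) measurable
        then show ?thesis unfolding fAt_def by simp
      qed
      have "W r = enn2real (\<integral>\<^sup>+ s. ennreal (J t s * (fAt' s r * ps s)) \<partial>lborel)"
        unfolding W_def using wm fAt_nn[OF _ r] psi_nn
        by (intro integral_eq_nn_integral AE_I2) (auto simp: indicator_def)
      then have Wle: "ennreal (W r) \<le> (\<integral>\<^sup>+ s. ennreal (J t s * (fAt' s r * ps s)) \<partial>lborel)"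
        by (simp add: ennreal_enn2real_if)
      have Fe: "F r = (1 / Ps) * (hX r * W r)" using r by (simp add: F_def indicator_def)
      have e1: "ennreal ((1 / Ps) * (hX r * W r)) = ennreal (1 / Ps) * ennreal (hX r * W r)"
        by (rule ennreal_mult) (use Ps hX_nn[of r] W_nn[OF r] in auto)
      have e2: "ennreal (hX r * W r) = ennreal (hX r) * ennreal (W r)"
        by (rule ennreal_mult) (use hX_nn[of r] W_nn[OF r] in auto)
      have "ennreal (F r) = ennreal (1 / Ps) * (ennreal (hX r) * ennreal (W r))"
        unfolding Fe e1 e2 ..
      also have "\<dots> \<le> ennreal (1 / Ps) * (ennreal (hX r) * (\<integral>\<^sup>+ s. ennreal (J t s * (fAt' s r * ps s)) \<partial>lborel))"
        using Wle by (intro mult_left_mono) auto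
      also have "ennreal (hX r) * (\<integral>\<^sup>+ s. ennreal (J t s * (fAt' s r * ps s)) \<partial>lborel)
          = (\<integral>\<^sup>+ s. ennreal (hX r) * ennreal (J t s * (fAt' s r * ps s)) \<partial>lborel)"
        using wm by (subst nn_integral_cmult) auto
      also have "\<dots> = (\<integral>\<^sup>+ s. ennreal (H r s) \<partial>lborel)"
        using r hX_nn[of r] by (intro nn_integral_cong) (simp add: H_def ennreal_mult')
      finally show ?thesis .
    qed
    have Hm2: "(\<lambda>r. \<integral>\<^sup>+ s. ennreal (H r s) \<partial>lborel) \<in> borel_measurable lborel"
    proof -
      have "(\<lambda>(r, s). ennreal (H r s)) \<in> borel_measurable (lborel \<Otimes>\<^sub>M lborel)"
        using H_meas unfolding case_prod_beta by measurable
      from lborel.borel_measurable_nn_integral[OF this] show ?thesis .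
    qed
    have "ennreal (integral\<^sup>L lborel F) = (\<integral>\<^sup>+ r. ennreal (F r) \<partial>lborel)"
      using True F_nn by (intro nn_integral_eq_integral[symmetric]) auto
    also have "\<dots> \<le> (\<integral>\<^sup>+ r. ennreal (1 / Ps) * (\<integral>\<^sup>+ s. ennreal (H r s) \<partial>lborel) \<partial>lborel)"
      using step3 by (intro nn_integral_mono) auto
    also have "\<dots> = ennreal (1 / Ps) * (\<integral>\<^sup>+ r. (\<integral>\<^sup>+ s. ennreal (H r s) \<partial>lborel) \<partial>lborel)"
      using Hm2 by (rule nn_integral_cmult)
    also have "(\<integral>\<^sup>+ r. (\<integral>\<^sup>+ s. ennreal (H r s) \<partial>lborel) \<partial>lborel)
             = (\<integral>\<^sup>+ s. (\<integral>\<^sup>+ r. ennreal (H r s) \<partial>lborel) \<partial>lborel)"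
    proof -
      have "case_prod (\<lambda>r s. ennreal (H r s)) \<in> borel_measurable (lborel \<Otimes>\<^sub>M lborel)"
        using H_meas unfolding case_prod_beta by measurable
      from lborel_pair.Fubini'[OF this] show ?thesis by simp
    qed
    also have "(\<integral>\<^sup>+ s. (\<integral>\<^sup>+ r. ennreal (H r s) \<partial>lborel) \<partial>lborel)
             \<le> (\<integral>\<^sup>+ s. ennreal (J t s * (sXt s / mXt s * ps s)) \<partial>lborel)"
    proof (rule nn_integral_mono_AE)
      show "AE s in lborel. (\<integral>\<^sup>+ r. ennreal (H r s) \<partial>lborel) \<le> ennreal (J t s * (sXt s / mXt s * ps s))"
        using AE_lborel_singleton[of 0]
      proof (rule eventually_mono)
        fix s :: real assume s0: "s \<noteq> 0"
        show "(\<integral>\<^sup>+ r. ennreal (H r s) \<partial>lborel) \<le> ennreal (J t s * (sXt s / mXt s * ps s))"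
        proof (cases "s \<in> {0..t}")
          case False then show ?thesis by (simp add: H_def)
        next
          case True
          then have s: "s > 0" using s0 by auto
          then have s': "s \<ge> 0" by simp
          have km: "(\<lambda>r. hX r * (I r * fAt' s r)) \<in> borel_measurable lborel"
            using hfAt_int[OF s'] by (rule borel_measurable_integrable)
          have kn: "hX r * (I r * fAt' s r) \<ge> 0" for r
            using hX_nn[of r] fAt_nn[OF s', of r] by (auto simp: indicator_def)
          have "(\<integral>\<^sup>+ r. ennreal (H r s) \<partial>lborel)
              = (\<integral>\<^sup>+ r. ennreal (ps s) * ennreal (hX r * (I r * fAt' s r)) \<partial>lborel)"
            using True psi_nn[OF s'] kn by (intro nn_integral_cong) (simp add: H_def ennreal_mult'[symmetric] mult_ac)
          also have "\<dots> = ennreal (ps s) * (\<integral>\<^sup>+ r. ennreal (hX r * (I r * fAt' s r)) \<partial>lborel)"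
            using km by (subst nn_integral_cmult) auto
          also have "(\<integral>\<^sup>+ r. ennreal (hX r * (I r * fAt' s r)) \<partial>lborel)
              = ennreal (integral\<^sup>L lborel (\<lambda>r. hX r * (I r * fAt' s r)))"
            using hfAt_int[OF s'] kn by (intro nn_integral_eq_integral) auto
          also have "ennreal (ps s) * \<dots> \<le> ennreal (ps s) * ennreal (sXt s / mXt s)"
            using hfAt_le[OF s] by (intro mult_left_mono ennreal_leI) auto
          also have "\<dots> = ennreal (J t s * (sXt s / mXt s * ps s))"
            using True psi_nn[OF s'] by (simp add: ennreal_mult'[symmetric] mult_ac)
          finally show ?thesis .
        qed
      qed
    qed
    also have "(\<integral>\<^sup>+ s. ennreal (J t s * (sXt s / mXt s * ps s)) \<partial>lborel) = ennreal SL"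
      unfolding SL_def using SLint sXt_nn mXt_nn psi_nn
      by (intro nn_integral_eq_integral AE_I2) (auto simp: indicator_def)
    finally have "ennreal (integral\<^sup>L lborel F) \<le> ennreal (1 / Ps) * ennreal SL"
      by (simp add: mult_left_mono)
    moreover have "ennreal ((1 / Ps) * SL) = ennreal (1 / Ps) * ennreal SL"
      by (rule ennreal_mult) (use Ps SL_nn in auto)
    ultimately have "ennreal (integral\<^sup>L lborel F) \<le> ennreal ((1 / Ps) * SL)"
      by simp
    then have "integral\<^sup>L lborel F \<le> (1 / Ps) * SL" using SL_nn Ps by simp
    then show ?thesis unfolding lhs rhs .
  qed
qed

end
end

theorem theorem1:
  fixes M :: "'w measure" and X :: "real \<Rightarrow> 'w \<Rightarrow> nat"
    and fA \<phi> :: "real \<Rightarrow> real" and p :: "real \<Rightarrow> real \<Rightarrow> real" and t :: real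
  assumes M: "prob_space M"
    and X_meas: "\<And>r. r \<ge> 0 \<Longrightarrow> X r \<in> measurable M (count_space UNIV)"
    and X_0: "\<And>\<omega>. \<omega> \<in> space M \<Longrightarrow> X 0 \<omega> = 0"
    and X_mono: "\<And>\<omega> r r'. \<omega> \<in> space M \<Longrightarrow> 0 \<le> r \<Longrightarrow> r \<le> r' \<Longrightarrow> X r \<omega> \<le> X r' \<omega>"
    and X_mom: "\<And>r. r \<ge> 0 \<Longrightarrow> integrable M (\<lambda>\<omega>. (real (X r \<omega>))\<^sup>2)"
    and fA_meas: "fA \<in> borel_measurable borel"
    and fA_nonneg: "\<And>a. a \<ge> 0 \<Longrightarrow> fA a \<ge> 0"
    and fA_int: "set_integrable lborel {0..} fA"
    and fA_one: "set_lebesgue_integral lborel {0..} fA = 1"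
    and phi_meas: "\<phi> \<in> borel_measurable borel"
    and phi_nonneg: "\<And>s. s \<ge> 0 \<Longrightarrow> \<phi> s \<ge> 0"
    and p_meas: "(\<lambda>x. p (fst x) (snd x)) \<in> borel_measurable borel"
    and p_range: "\<And>u s. u \<ge> 0 \<Longrightarrow> s \<ge> 0 \<Longrightarrow> 0 \<le> p u s \<and> p u s \<le> 1"
    and psi_int: "\<And>T. T \<ge> 0 \<Longrightarrow> set_integrable lborel {0..T} (psi \<phi> p fA)"
    and Xt_mom: "\<And>s. s \<ge> 0 \<Longrightarrow> set_integrable lborel {0..} (\<lambda>a. sqmX M X a * fAt p fA s a)"
    and Y_mom: "\<And>T. T \<ge> 0 \<Longrightarrow>
                  set_integrable lborel {0..T} (\<lambda>s. sqmXt M X p fA s * psi \<phi> p fA s)"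
    and norm_pos: "\<And>s. s \<ge> 0 \<Longrightarrow> cons_norm p fA s > 0"
    and meanX_pos: "\<And>r. r > 0 \<Longrightarrow> meanX M X r > 0"
    and meanXt_pos: "\<And>s. s > 0 \<Longrightarrow> meanXt M X p fA s > 0"
    and Psi_pos: "\<And>T. T > 0 \<Longrightarrow> Psi \<phi> p fA T > 0"
    and meanY_pos: "\<And>T. T > 0 \<Longrightarrow> meanY M X p fA \<phi> T > 0"
    and A: "\<And>s r. 0 \<le> s \<Longrightarrow> s \<le> r \<Longrightarrow> lr_le (pmfX M X s) (pmfX M X r)"
    and B: "\<And>s r. 0 \<le> s \<Longrightarrow> s < r \<Longrightarrow>
              mono_on {u. u \<ge> 0 \<and> (p u s > 0 \<or> p u r > 0)} (\<lambda>u. ext_ratio (p u r) (p u s))"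
    and t_pos: "t > 0"
  shows "(varY M X p fA \<phi> t / meanY M X p fA \<phi> t \<le> sqmXt M X p fA t / meanXt M X p fA t) \<and>
         (varY M X p fA \<phi> t / meanY M X p fA \<phi> t \<ge>
           (1 / Psi \<phi> p fA t) * set_lebesgue_integral lborel {0..t}
              (\<lambda>s. (sqmXt M X p fA s / meanXt M X p fA s) * psi \<phi> p fA s)) \<and>
         ((1 / Psi \<phi> p fA t) * set_lebesgue_integral lborel {0..t}
              (\<lambda>s. (sqmXt M X p fA s / meanXt M X p fA s) * psi \<phi> p fA s)
         \<ge> set_lebesgue_integral lborel {0..}
              (\<lambda>r. (varX M X r / meanX M X r + meanX M X r) *
                   ((1 / Psi \<phi> p fA t) * set_lebesgue_integral lborel {0..t}
                      (\<lambda>s. fAt p fA s r * psi \<phi> p fA s))))"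
  proof -
  interpret m: model2 M X fA \<phi> p
    by (intro model2.intro model.intro model2_axioms.intro) (fact M X_meas X_0 X_mono X_mom meanX_pos A fA_meas fA_nonneg fA_int phi_meas
        phi_nonneg p_meas p_range psi_int Xt_mom Y_mom norm_pos meanXt_pos Psi_pos meanY_pos B)+
  show ?thesis by (intro conjI m.claim1[OF t_pos] m.claim2[OF t_pos] m.claim3[OF t_pos])
qed

end
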